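(* Let $r$ be a non-negative integer and $B(x,y)=(-1)^{x+y}$. Then there exist $C\in\mathbb{Q}(q)$ and a $q$-polynomial $T(x,y)$ in $x$ and $y$ over $\mathbb{Q}$ such that $D(r,B)(x,y)=(-1)^{x+y}q^{r(x+y)}C+T(x,y)$ for all integers $x,y$.
   Context: $q$ is an indeterminate. Sums use the convention: $\sum_{i=a}^bf(i)=f(a)+\cdots+f(b)$ if $a\le b$, $0$ if $b=a-1$, and $-f(b+1)-\cdots-f(a-1)$ if $b+1\le a-1$. $D(0,B)=B$ and $D(r,B)(x,y)=\sum_{x'=x+1}^{y+1}\sum_{y'=x}^{y}D(r-1,B)(x',y')\,q^{x'+y'}$. A $q$-polynomial in $x,y$ over $\mathbb{Q}$ is a polynomial in $q^x,q^y$ with coefficients in $\mathbb{Q}(q)$. *)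

theory Defs
  imports "HOL-Computational_Algebra.Polynomial" "HOL-Computational_Algebra.Fraction_Field"
begin

type_synonym qfield = "rat poly fract"

definition qq :: qfield where
  "qq = Fract [:0, 1:] 1"

text \<open>Signed sum convention over integer bounds.\<close>
definition gsum :: "(int \<Rightarrow> 'a::ab_group_add) \<Rightarrow> int \<Rightarrow> int \<Rightarrow> 'a" where
  "gsum f a b = (if a \<le> b then sum f {a..b} else - sum f {b+1..a-1})"

fun D :: "nat \<Rightarrow> (int \<Rightarrow> int \<Rightarrow> qfield) \<Rightarrow> int \<Rightarrow> int \<Rightarrow> qfield" where
  "D 0 B x y = B x y"
| "D (Suc r) B x y =
     gsum (\<lambda>x'. gsum (\<lambda>y'. D r B x' y' * qq powi (x' + y')) x y) (x + 1) (y + 1)"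

definition is_qpoly2 :: "(int \<Rightarrow> int \<Rightarrow> qfield) \<Rightarrow> bool" where
  "is_qpoly2 T \<longleftrightarrow> (\<exists>S c. finite S \<and>
     (\<forall>x y. T x y = (\<Sum>(i,j)\<in>S. c i j * (qq powi x) ^ i * (qq powi y) ^ j)))"

end

theory Submission
  imports Defs
begin

lemma qq_pow: "qq ^ k = Fract ([:0,1:] ^ k) 1"
  by (induction k) (auto simp: qq_def One_fract_def)

lemma qq_nz: "qq \<noteq> 0"
  by (simp add: qq_def Zero_fract_def eq_fract)

lemma qq_pow_ne1: "k > 0 \<Longrightarrow> qq ^ k \<noteq> 1"
proof
  assume k: "k > 0" and h: "qq ^ k = 1"
  hence "[:0,1::rat:] ^ k = 1" by (simp add: qq_pow One_fract_def eq_fract)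
  hence "degree ([:0,1::rat:] ^ k) = 0" by simp
  moreover have "degree ([:0,1::rat:] ^ k) = k" by (simp add: degree_power_eq)
  ultimately show False using k by simp
qed

lemma qq_pow_neg_ne1: "- (qq ^ k) \<noteq> 1"
proof
  assume h: "- (qq ^ k) = 1"
  hence e: "- ([:0,1::rat:] ^ k) = 1" by (simp add: qq_pow One_fract_def eq_fract)
  hence "degree ([:0,1::rat:] ^ k) = 0" by (metis degree_1 degree_minus)
  moreover have "degree ([:0,1::rat:] ^ k) = k" by (simp add: degree_power_eq)
  ultimately have "k = 0" by simp
  with e show False by simp
qed

lemma sum_tele_aux: "(a::int) - 1 \<le> b \<Longrightarrow> sum (\<lambda>k. f (k+1) - f k) {a..b} = f (b+1) - (f a :: 'a::ab_group_add)"
proof (induction b rule: int_ge_induct[where k = "a - 1"])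
  case base then show ?case by simp
next
  case (step i)
  have "{a..i+1} = insert (1+i) {a..i}" using step.hyps
    using atLeastAtMostPlus1_int_conv[of a i] by (simp add: add.commute)
  then show ?case using step by (simp add: add.commute)
qed

lemma gsum_tele: "gsum (\<lambda>k. f (k+1) - f k) a b = f (b+1) - (f a :: 'a::ab_group_add)"
proof (cases "a \<le> b")
  case True then show ?thesis by (simp add: gsum_def sum_tele_aux)
next
  case False
  then have "sum (\<lambda>k. f (k+1) - f k) {b+1..a-1} = f a - f (b+1)"
    using sum_tele_aux[of "b+1" "a-1" f] by simp
  then show ?thesis using False by (simp add: gsum_def)
qed

lemma gsum_add: "gsum (\<lambda>k. f k + g k) a b = gsum f a b + gsum g a b"
  by (simp add: gsum_def sum.distrib)

lemma gsum_cmult: "gsum (\<lambda>k. c * f k) a b = (c :: 'a::ring) * gsum f a b"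
  by (simp add: gsum_def sum_distrib_left)

lemma gsum_multc: "gsum (\<lambda>k. f k * c) a b = gsum f a b * (c :: 'a::ring)"
  by (simp add: gsum_def sum_distrib_right)

lemma gsum_sum: "gsum (\<lambda>k. \<Sum>p\<in>S. f p k) a b = (\<Sum>p\<in>S. gsum (f p) a b)"
  by (simp add: gsum_def sum.swap[of _ S] sum_negf)

lemma gsum_geom:
  fixes z :: "'a::field"
  assumes "z \<noteq> 0" "z \<noteq> 1"
  shows "gsum (\<lambda>k. z powi k) a b = (z powi (b+1) - z powi a) / (z - 1)"
proof -
  have "\<And>k. z powi k = (z powi (k+1) - z powi k) * inverse (z - 1)"
    using assms by (simp add: power_int_add_1 field_simps)
  then have "gsum (\<lambda>k. z powi k) a b = gsum (\<lambda>k. (z powi (k+1) - z powi k) * inverse (z - 1)) a b"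
    by presburger
  also have "\<dots> = (z powi (b+1) - z powi a) * inverse (z - 1)"
    by (simp only: gsum_multc gsum_tele)
  finally show ?thesis by (simp add: divide_inverse)
qed

definition E :: "(int \<Rightarrow> int \<Rightarrow> qfield) \<Rightarrow> int \<Rightarrow> int \<Rightarrow> qfield" where
  "E f x y = gsum (\<lambda>x'. gsum (\<lambda>y'. f x' y' * qq powi (x' + y')) x y) (x + 1) (y + 1)"

lemma D_Suc: "D (Suc r) B x y = E (D r B) x y"
  by (simp add: E_def)

lemma E_lin: "E (\<lambda>x y. c * f x y + g x y) x y = c * E f x y + E g x y"
  by (simp add: E_def distrib_right gsum_add gsum_cmult mult.assoc)

lemma E_sum: "E (\<lambda>x y. \<Sum>p\<in>S. F p x y) x y = (\<Sum>p\<in>S. E (F p) x y)"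
  by (simp add: E_def sum_distrib_right gsum_sum)

lemma E_mono:
  assumes "u * qq \<noteq> 1" "v * qq \<noteq> 1" "u \<noteq> 0" "v \<noteq> 0"
  shows "E (\<lambda>x y. u powi x * v powi y) x y =
    ((u*qq) powi (y+2) - (u*qq) powi (x+1)) * ((v*qq) powi (y+1) - (v*qq) powi x)
      / ((u*qq - 1) * (v*qq - 1))"
proof -
  have "\<And>a b. u powi a * v powi b * qq powi (a + b) = (u*qq) powi a * (v*qq) powi b"
    using qq_nz by (simp add: power_int_add power_int_mult_distrib)
  then have "E (\<lambda>x y. u powi x * v powi y) x y =
     gsum (\<lambda>x'. (u*qq) powi x' * gsum (\<lambda>y'. (v*qq) powi y') x y) (x + 1) (y + 1)"
    by (simp add: E_def gsum_cmult)
  also have "\<dots> = gsum (\<lambda>x'. (u*qq) powi x') (x + 1) (y + 1) * gsum (\<lambda>y'. (v*qq) powi y') x y"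
    by (simp add: gsum_multc)
  also have "\<dots> = ((u*qq) powi (y+2) - (u*qq) powi (x+1)) * ((v*qq) powi (y+1) - (v*qq) powi x)
      / ((u*qq - 1) * (v*qq - 1))" using assms qq_nz
    by (simp add: gsum_geom add.assoc)
  finally show ?thesis .
qed

lemma E_cmult: "E (\<lambda>x y. c * f x y) x y = c * E f x y"
  by (simp add: E_def gsum_cmult mult.assoc)

lemma E_add: "E (\<lambda>x y. f x y + g x y) x y = E f x y + E g x y"
  by (simp add: E_def distrib_right gsum_add)

lemma mono_eq: "(qq powi x) ^ i = (qq ^ i) powi x"
  by (simp only: power_int_power power_int_power' mult.commute)

lemma qp_zero: "is_qpoly2 (\<lambda>x y. 0)"
  unfolding is_qpoly2_def by (rule exI[of _ "{}"]) simp

lemma qp_mono: "is_qpoly2 (\<lambda>x y. c * (qq ^ i) powi x * (qq ^ j) powi y)"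
  unfolding is_qpoly2_def
  by (rule exI[of _ "{(i,j)}"], rule exI[of _ "\<lambda>_ _. c"]) (simp add: mono_eq)

lemma qp_cmult: "is_qpoly2 T \<Longrightarrow> is_qpoly2 (\<lambda>x y. a * T x y)"
  unfolding is_qpoly2_def
proof (elim exE conjE)
  fix S c assume S: "finite S" and T: "\<forall>x y. T x y = (\<Sum>(i, j)\<in>S. c i j * (qq powi x) ^ i * (qq powi y) ^ j)"
  show "\<exists>S c. finite S \<and> (\<forall>x y. a * T x y = (\<Sum>(i, j)\<in>S. c i j * (qq powi x) ^ i * (qq powi y) ^ j))"
    by (rule exI[of _ S], rule exI[of _ "\<lambda>i j. a * c i j"])
       (simp add: S T sum_distrib_left case_prod_unfold mult.assoc)
qed

lemma sum_restr: "finite U \<Longrightarrow> S \<subseteq> U \<Longrightarrow> (\<Sum>p\<in>U. if p \<in> S then g p else 0) = sum g S"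
  by (metis Int_absorb1 inf_commute sum.inter_restrict)

lemma qp_add: "is_qpoly2 T1 \<Longrightarrow> is_qpoly2 T2 \<Longrightarrow> is_qpoly2 (\<lambda>x y. T1 x y + T2 x y)"
  unfolding is_qpoly2_def
proof (elim exE conjE)
  fix S1 c1 S2 c2 assume S1: "finite S1" and T1: "\<forall>x y. T1 x y = (\<Sum>(i, j)\<in>S1. c1 i j * (qq powi x) ^ i * (qq powi y) ^ j)"
    and S2: "finite S2" and T2: "\<forall>x y. T2 x y = (\<Sum>(i, j)\<in>S2. c2 i j * (qq powi x) ^ i * (qq powi y) ^ j)"
  define U where "U = S1 \<union> S2"
  define c where "c = (\<lambda>i j. (if (i,j) \<in> S1 then c1 i j else 0) + (if (i,j) \<in> S2 then c2 i j else 0))"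
  have fU: "finite U" using S1 S2 by (simp add: U_def)
  have "T1 x y + T2 x y = (\<Sum>(i, j)\<in>U. c i j * (qq powi x) ^ i * (qq powi y) ^ j)" for x y
  proof -
    define g1 where "g1 = (\<lambda>(i, j). c1 i j * (qq powi x) ^ i * (qq powi y) ^ j)"
    define g2 where "g2 = (\<lambda>(i, j). c2 i j * (qq powi x) ^ i * (qq powi y) ^ j)"
    have "(\<lambda>(i, j). c i j * (qq powi x) ^ i * (qq powi y) ^ j) = (\<lambda>p. (if p \<in> S1 then g1 p else 0) + (if p \<in> S2 then g2 p else 0))"
      by (auto simp: c_def g1_def g2_def distrib_right)
    then have "(\<Sum>(i, j)\<in>U. c i j * (qq powi x) ^ i * (qq powi y) ^ j)
       = (\<Sum>p\<in>U. if p \<in> S1 then g1 p else 0) + (\<Sum>p\<in>U. if p \<in> S2 then g2 p else 0)"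
      by (simp only: sum.distrib)
    also have "\<dots> = sum g1 S1 + sum g2 S2"
      using sum_restr[OF fU, of S1 g1] sum_restr[OF fU, of S2 g2] by (simp add: U_def)
    also have "\<dots> = T1 x y + T2 x y" using T1 T2 by (simp add: g1_def g2_def)
    finally show ?thesis by simp
  qed
  then show "\<exists>S c. finite S \<and> (\<forall>x y. T1 x y + T2 x y = (\<Sum>(i, j)\<in>S. c i j * (qq powi x) ^ i * (qq powi y) ^ j))"
    using fU by blast
qed

lemma qp_sum: "finite S \<Longrightarrow> (\<forall>p\<in>S. is_qpoly2 (F p)) \<Longrightarrow> is_qpoly2 (\<lambda>x y. \<Sum>p\<in>S. F p x y)"
proof (induction S rule: finite_induct)
  case empty then show ?case by (simp add: qp_zero)
next
  case (insert a S)
  then show ?case using qp_add[of "F a" "\<lambda>x y. \<Sum>p\<in>S. F p x y"] by simp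
qed

lemma expand4:
  fixes z1 z2 :: "'a::field"
  assumes "z1 \<noteq> 0" "z2 \<noteq> 0"
  shows "(z1 powi (y+2) - z1 powi (x+1)) * (z2 powi (y+1) - z2 powi x)
    = z1^2*z2 * (z1*z2) powi y - z1^2 * (z2 powi x * z1 powi y) - z1*z2 * (z1 powi x * z2 powi y) + z1 * (z1*z2) powi x"
proof -
  have a: "z1 powi (y+2) = z1 powi y * z1^2" "z1 powi (x+1) = z1 powi x * z1" "z2 powi (y+1) = z2 powi y * z2"
    using assms by (simp_all add: power_int_add)
  show ?thesis unfolding a power_int_mult_distrib by (simp add: power2_eq_square algebra_simps)
qed

lemma qp_E_mono: "is_qpoly2 (E (\<lambda>x y. (qq ^ i) powi x * (qq ^ j) powi y))"
proof -
  define z1 where "z1 = qq ^ (i+1)"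
  define z2 where "z2 = qq ^ (j+1)"
  have z1: "qq ^ i * qq = z1" "z1 \<noteq> 0" "z1 \<noteq> 1" using qq_nz qq_pow_ne1[of "i+1"] by (auto simp: z1_def)
  have z2: "qq ^ j * qq = z2" "z2 \<noteq> 0" "z2 \<noteq> 1" using qq_nz qq_pow_ne1[of "j+1"] by (auto simp: z2_def)
  have z12: "z1 * z2 = qq ^ (i+j+2)" by (simp add: z1_def z2_def power_add[symmetric])
  define K where "K = inverse ((z1 - 1) * (z2 - 1))"
  have "E (\<lambda>x y. (qq ^ i) powi x * (qq ^ j) powi y) x y =
     (K * (z1^2*z2)) * (qq^0) powi x * (qq ^ (i+j+2)) powi y
     + (- K * z1^2) * (qq^(j+1)) powi x * (qq^(i+1)) powi y
     + (- K * z1 * z2) * (qq^(i+1)) powi x * (qq^(j+1)) powi y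
     + (K * z1) * (qq ^ (i+j+2)) powi x * (qq^0) powi y" for x y
  proof -
    have "E (\<lambda>x y. (qq ^ i) powi x * (qq ^ j) powi y) x y =
      (z1 powi (y+2) - z1 powi (x+1)) * (z2 powi (y+1) - z2 powi x) / ((z1 - 1) * (z2 - 1))"
      using E_mono[of "qq^i" "qq^j" x y] z1 z2 qq_nz by simp
    also have "\<dots> = K * (z1^2*z2 * (z1*z2) powi y - z1^2 * (z2 powi x * z1 powi y) - z1*z2 * (z1 powi x * z2 powi y) + z1 * (z1*z2) powi x)"
      unfolding expand4[OF z1(2) z2(2)] K_def by (simp add: divide_inverse mult.commute)
    also have "\<dots> = K * (z1^2*z2 * (qq ^ (i+j+2)) powi y - z1^2 * ((qq^(j+1)) powi x * (qq^(i+1)) powi y) - z1*z2 * ((qq^(i+1)) powi x * (qq^(j+1)) powi y) + z1 * (qq ^ (i+j+2)) powi x)"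
      unfolding z12 by (simp only: z1_def z2_def)
    also have "\<dots> = (K * (z1^2*z2)) * (qq^0) powi x * (qq ^ (i+j+2)) powi y
     + (- K * z1^2) * (qq^(j+1)) powi x * (qq^(i+1)) powi y
     + (- K * z1 * z2) * (qq^(i+1)) powi x * (qq^(j+1)) powi y
     + (K * z1) * (qq ^ (i+j+2)) powi x * (qq^0) powi y"
      by (simp add: algebra_simps)
    finally show ?thesis .
  qed
  moreover have "is_qpoly2 (\<lambda>x y. (K * (z1^2*z2)) * (qq^0) powi x * (qq ^ (i+j+2)) powi y
     + (- K * z1^2) * (qq^(j+1)) powi x * (qq^(i+1)) powi y
     + (- K * z1 * z2) * (qq^(i+1)) powi x * (qq^(j+1)) powi y
     + (K * z1) * (qq ^ (i+j+2)) powi x * (qq^0) powi y)"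
    by (intro qp_add qp_mono)
  ultimately show ?thesis by presburger
qed

lemma qp_E: "is_qpoly2 T \<Longrightarrow> is_qpoly2 (E T)"
proof -
  assume "is_qpoly2 T"
  then obtain S c where S: "finite S" and T: "\<And>x y. T x y = (\<Sum>(i, j)\<in>S. c i j * (qq powi x) ^ i * (qq powi y) ^ j)"
    unfolding is_qpoly2_def by blast
  have Tf: "T = (\<lambda>x y. \<Sum>p\<in>S. c (fst p) (snd p) * ((qq ^ fst p) powi x * (qq ^ snd p) powi y))"
    by (intro ext) (simp add: T case_prod_unfold mono_eq mult.assoc)
  have "E T x y = (\<Sum>p\<in>S. c (fst p) (snd p) * E (\<lambda>x y. (qq ^ fst p) powi x * (qq ^ snd p) powi y) x y)" for x y
    unfolding Tf E_sum E_cmult ..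
  moreover have "is_qpoly2 (\<lambda>x y. \<Sum>p\<in>S. c (fst p) (snd p) * E (\<lambda>x y. (qq ^ fst p) powi x * (qq ^ snd p) powi y) x y)"
    using S by (intro qp_sum ballI qp_cmult qp_E_mono)
  ultimately show ?thesis by presburger
qed

definition sg :: "nat \<Rightarrow> int \<Rightarrow> int \<Rightarrow> qfield" where
  "sg r x y = (- (qq ^ r)) powi x * (- (qq ^ r)) powi y"

lemma E_sg: "\<exists>K T. is_qpoly2 T \<and> (\<forall>x y. E (sg r) x y = sg (Suc r) x y * K + T x y)"
proof -
  define z where "z = - (qq ^ (Suc r))"
  have z: "- (qq ^ r) * qq = z" "z \<noteq> 0" "z \<noteq> 1" using qq_nz qq_pow_neg_ne1[of "Suc r"]
    by (auto simp: z_def)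
  have zz: "z * z = qq ^ (2 * r + 2)" by (simp add: z_def power_add[symmetric] mult_2)
  define K where "K = inverse ((z - 1) * (z - 1))"
  have "E (sg r) x y = sg (Suc r) x y * (- 2 * K * z^2) +
     ((K * z^3) * (qq^0) powi x * (qq ^ (2*r+2)) powi y + (K * z) * (qq ^ (2*r+2)) powi x * (qq^0) powi y)" for x y
  proof -
    have "E (sg r) x y = (z powi (y+2) - z powi (x+1)) * (z powi (y+1) - z powi x) / ((z - 1) * (z - 1))"
      unfolding sg_def using E_mono[of "- (qq ^ r)" "- (qq ^ r)" x y] z qq_nz by simp
    also have "\<dots> = K * (z^2*z * (z*z) powi y - z^2 * (z powi x * z powi y) - z*z * (z powi x * z powi y) + z * (z*z) powi x)"
      unfolding expand4[OF z(2) z(2)] K_def by (simp add: divide_inverse mult.commute)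
    also have "\<dots> = K * (z^2*z * (qq ^ (2*r+2)) powi y - z^2 * sg (Suc r) x y - z*z * sg (Suc r) x y + z * (qq ^ (2*r+2)) powi x)"
      unfolding zz by (simp only: sg_def z_def)
    also have "\<dots> = sg (Suc r) x y * (- 2 * K * z^2) +
     ((K * z^3) * (qq^0) powi x * (qq ^ (2*r+2)) powi y + (K * z) * (qq ^ (2*r+2)) powi x * (qq^0) powi y)"
      by (simp add: algebra_simps power2_eq_square power3_eq_cube)
    finally show ?thesis .
  qed
  moreover have "is_qpoly2 (\<lambda>x y. (K * z^3) * (qq^0) powi x * (qq ^ (2*r+2)) powi y + (K * z) * (qq ^ (2*r+2)) powi x * (qq^0) powi y)"
    by (intro qp_add qp_mono)
  ultimately show ?thesis by blast
qed

lemma main: "\<exists>C T. is_qpoly2 T \<and> (\<forall>x y. D r (\<lambda>x y. (-1) powi (x + y)) x y = sg r x y * C + T x y)"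
proof (induction r)
  case 0
  have "(-1::qfield) powi (x + y) = sg 0 x y * 1 + 0" for x y
    by (simp add: sg_def power_int_add)
  then show ?case using qp_zero by fastforce
next
  case (Suc r)
  then obtain C T where T: "is_qpoly2 T" and DT: "\<And>x y. D r (\<lambda>x y. (-1) powi (x + y)) x y = sg r x y * C + T x y"
    by blast
  obtain K T' where T': "is_qpoly2 T'" and ET: "\<And>x y. E (sg r) x y = sg (Suc r) x y * K + T' x y"
    using E_sg[of r] by blast
  have Df: "D r (\<lambda>x y. (-1) powi (x + y)) = (\<lambda>x y. C * sg r x y + T x y)"
    by (intro ext) (simp add: DT mult.commute)
  have "D (Suc r) (\<lambda>x y. (-1) powi (x + y)) x y = sg (Suc r) x y * (C * K) + (C * T' x y + E T x y)" for x y
    unfolding D_Suc Df E_add E_cmult ET by (simp add: algebra_simps)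
  moreover have "is_qpoly2 (\<lambda>x y. C * T' x y + E T x y)"
    using T T' by (intro qp_add qp_cmult qp_E)
  ultimately show ?case by blast
qed

theorem lemma18:
  fixes r :: nat
  shows "\<exists>(C::qfield) T. is_qpoly2 T \<and>
    (\<forall>x y :: int. D r (\<lambda>x y. (-1) powi (x + y)) x y
        = (-1) powi (x + y) * qq powi (int r * (x + y)) * C + T x y)"
proof -
  have sg: "sg r x y = (-1) powi (x + y) * qq powi (int r * (x + y))" for x y
  proof -
    have "sg r x y = ((-1) powi x * (-1) powi y) * ((qq ^ r) powi x * (qq ^ r) powi y)"
      unfolding sg_def by (simp add: power_int_mult_distrib[symmetric] algebra_simps)
    also have "\<dots> = (-1) powi (x + y) * (qq ^ r) powi (x + y)"
      using qq_nz by (simp add: power_int_add)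
    finally show ?thesis by (simp add: power_int_power)
  qed
  show ?thesis using main[of r] unfolding sg by blast
qed

end
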